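(* Let $X$ be a finite dimensional real Hilbert space and $\bar{x}\in X$. Let $H_{1}\subset X$ be a closed halfspace and $x_{1}=P_{H_{1}}(\bar{x})$. Let $H_{2}\subset X$ be a closed halfspace with $H_{1}\cap H_{2}\neq\emptyset$, let $d=d(x_{1},H_{2})$, and let $x_{2}=P_{H_{1}\cap H_{2}}(\bar{x})$. Then $\|\bar{x}-x_{2}\|^{2}\geq\|\bar{x}-x_{1}\|^{2}+d^{2}$.
   Context: $P_{S}(y)$ denotes the (metric) projection of $y$ onto a nonempty closed convex set $S$, and $d(y,S)=\inf_{s\in S}\|y-s\|$. *)

theory Defs
  imports "HOL-Analysis.Analysis"
begin

definition closed_halfspace :: "'a::real_inner set \<Rightarrow> bool" where
  "closed_halfspace H \<longleftrightarrow> (\<exists>a b. a \<noteq> 0 \<and> H = {x. inner a x \<le> b})"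

end

theory Submission
  imports Defs
begin

lemma hs_props:
  assumes "closed_halfspace (H::'a::euclidean_space set)"
  shows "closed H" "convex H"
proof -
  obtain a b where H: "H = {x. inner a x \<le> b}" using assms unfolding closed_halfspace_def by blast
  show "closed H" unfolding H by (rule closed_halfspace_le)
  show "convex H" unfolding H by (rule convex_halfspace_le)
qed

theorem lemma2p5:
  fixes xbar :: "'a::euclidean_space" and H1 H2 :: "'a set"
  assumes "closed_halfspace H1" and "closed_halfspace H2"
    and "H1 \<inter> H2 \<noteq> {}"
  shows "(norm (xbar - closest_point (H1 \<inter> H2) xbar))\<^sup>2 \<ge>
           (norm (xbar - closest_point H1 xbar))\<^sup>2 + (infdist (closest_point H1 xbar) H2)\<^sup>2"
proof -
  define x1 where "x1 = closest_point H1 xbar"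
  define x2 where "x2 = closest_point (H1 \<inter> H2) xbar"
  have c1: "closed H1" "convex H1" using hs_props assms(1) by auto
  have c2: "closed H2" using hs_props assms(2) by auto
  have ne1: "H1 \<noteq> {}" using assms(3) by auto
  have x2in: "x2 \<in> H1 \<inter> H2" unfolding x2_def
    using closest_point_in_set[of "H1 \<inter> H2"] c1 c2 assms(3) by auto
  have x1in: "x1 \<in> H1" unfolding x1_def using closest_point_in_set c1 ne1 by auto
  have dot: "inner (xbar - x1) (x2 - x1) \<le> 0"
    apply (rule any_closest_point_dot[OF c1(2) c1(1) x1in])
    using x2in apply blast
    using closest_point_le[OF c1(1)] unfolding x1_def by blast
  have id0: "infdist x1 H2 \<le> norm (x1 - x2)"
    using infdist_le[of x2 H2 x1] x2in by (simp add: dist_norm)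
  have "0 \<le> infdist x1 H2" by (rule infdist_nonneg)
  hence sq: "(infdist x1 H2)\<^sup>2 \<le> (norm (x1 - x2))\<^sup>2" using id0 by (simp add: power_mono)
  have "inner (xbar - x1) (x2 - x1) = ((norm (xbar - x1))\<^sup>2 + (norm (x2 - x1))\<^sup>2 - (norm ((xbar - x1) - (x2 - x1)))\<^sup>2) / 2"
    by (rule dot_norm_neg)
  moreover have "(xbar - x1) - (x2 - x1) = xbar - x2" by simp
  moreover have "norm (x2 - x1) = norm (x1 - x2)" by (rule norm_minus_commute)
  ultimately have "(norm (xbar - x2))\<^sup>2 \<ge> (norm (xbar - x1))\<^sup>2 + (norm (x1 - x2))\<^sup>2"
    using dot by auto
  thus ?thesis using sq unfolding x1_def x2_def by linarith
qed

end
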